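(* Let $R$ be a Hecke symmetry and let $\int:H_R\to\mathbb{K}$ be a left integral on $H_R$. Then $\int(x)=0$ for every element $x\in H_R$ that is homogeneous of nonzero degree with respect to the $\mathbb{Z}$-grading $\deg z^i_j=1$, $\deg t^i_j=-1$.
   Context: $\mathbb{K}$ is a field of characteristic zero, $q\in\mathbb{K}^\times$ not a root of unity ($q=1$ allowed). $R$ is a Hecke symmetry on $V$ (basis $x_1,\dots,x_d$, $(x_i\otimes x_j)R=\sum x_k\otimes x_lR^{kl}_{ij}$): invertible, satisfying Yang–Baxter, $(R+1)(R-q)=0$, and closed (a matrix $P$ with $\sum R^{il}_{jk}P^{km}_{ln}=\delta^i_n\delta^m_j$ exists). $H_R$ is the Hopf envelope of the bialgebra $E_R$; it is generated by $z^i_j$ and $t^i_j$ ($1\le i,j\le d$) subject to $\sum R^{mn}_{ij}z^k_mz^l_n=\sum z^p_iz^s_jR^{kl}_{ps}$, $\sum_jt^i_jz^j_k=\delta^i_k$, $\sum_jz^i_jt^j_k=\delta^i_k$, with $\Delta(z^j_i)=\sum_k z^j_k\otimes z^k_i$, $\Delta(t^j_i)=\sum_k t^k_i\otimes t^j_k$, antipode $S(z^i_j)=t^i_j$; these relations are homogeneous for the grading $\deg z=1$, $\deg t=-1$. A left integral is a linear functional $\int$ with $\int(x)=\sum x_{(1)}\int(x_{(2)})$ whenever $\Delta(x)=\sum x_{(1)}\otimes x_{(2)}$. *)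

theory Defs
  imports Main
begin

text \<open>A matrix on V (x) V with basis x_0..x_{d-1} is a function R with
  R k l i j = R^{kl}_{ij}, i.e. (x_i (x) x_j) R = sum_{k,l} x_k (x) x_l R^{kl}_{ij}.
  Only indices below d are relevant.\<close>

definition kd :: "nat \<Rightarrow> nat \<Rightarrow> 'k::field" where
  "kd a b = (if a = b then 1 else 0)"

definition R12 :: "(nat \<Rightarrow> nat \<Rightarrow> nat \<Rightarrow> nat \<Rightarrow> 'k::field) \<Rightarrow> nat \<times> nat \<times> nat \<Rightarrow> nat \<times> nat \<times> nat \<Rightarrow> 'k" where
  "R12 R = (\<lambda>(a,b,c) (i,j,k). R a b i j * kd c k)"

definition R23 :: "(nat \<Rightarrow> nat \<Rightarrow> nat \<Rightarrow> nat \<Rightarrow> 'k::field) \<Rightarrow> nat \<times> nat \<times> nat \<Rightarrow> nat \<times> nat \<times> nat \<Rightarrow> 'k" where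
  "R23 R = (\<lambda>(a,b,c) (i,j,k). kd a i * R b c j k)"

definition triples :: "nat \<Rightarrow> (nat \<times> nat \<times> nat) set" where
  "triples d = {..<d} \<times> {..<d} \<times> {..<d}"

text \<open>composition "first X then Y" of operators acting on the right\<close>
definition comp3 :: "nat \<Rightarrow> (nat \<times> nat \<times> nat \<Rightarrow> nat \<times> nat \<times> nat \<Rightarrow> 'k::field)
   \<Rightarrow> (nat \<times> nat \<times> nat \<Rightarrow> nat \<times> nat \<times> nat \<Rightarrow> 'k) \<Rightarrow> nat \<times> nat \<times> nat \<Rightarrow> nat \<times> nat \<times> nat \<Rightarrow> 'k" where
  "comp3 d X Y = (\<lambda>out inn. \<Sum>mid\<in>triples d. X mid inn * Y out mid)"

definition invertible_R :: "nat \<Rightarrow> (nat \<Rightarrow> nat \<Rightarrow> nat \<Rightarrow> nat \<Rightarrow> 'k::field) \<Rightarrow> bool" where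
  "invertible_R d R \<longleftrightarrow> (\<exists>R'. \<forall>i<d. \<forall>j<d. \<forall>m<d. \<forall>n<d.
      (\<Sum>k<d. \<Sum>l<d. R k l i j * R' m n k l) = kd m i * kd n j \<and>
      (\<Sum>k<d. \<Sum>l<d. R' k l i j * R m n k l) = kd m i * kd n j)"

definition yang_baxter :: "nat \<Rightarrow> (nat \<Rightarrow> nat \<Rightarrow> nat \<Rightarrow> nat \<Rightarrow> 'k::field) \<Rightarrow> bool" where
  "yang_baxter d R \<longleftrightarrow> (\<forall>out\<in>triples d. \<forall>inn\<in>triples d.
      comp3 d (comp3 d (R12 R) (R23 R)) (R12 R) out inn =
      comp3 d (comp3 d (R23 R) (R12 R)) (R23 R) out inn)"

text \<open>(R + 1)(R - q) = 0, i.e. R^2 + (1 - q) R - q = 0\<close>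
definition hecke_quadratic :: "nat \<Rightarrow> 'k::field \<Rightarrow> (nat \<Rightarrow> nat \<Rightarrow> nat \<Rightarrow> nat \<Rightarrow> 'k) \<Rightarrow> bool" where
  "hecke_quadratic d q R \<longleftrightarrow> (\<forall>i<d. \<forall>j<d. \<forall>m<d. \<forall>n<d.
      (\<Sum>k<d. \<Sum>l<d. R k l i j * R m n k l) + (1 - q) * R m n i j - q * kd m i * kd n j = 0)"

definition closed_R :: "nat \<Rightarrow> (nat \<Rightarrow> nat \<Rightarrow> nat \<Rightarrow> nat \<Rightarrow> 'k::field) \<Rightarrow> bool" where
  "closed_R d R \<longleftrightarrow> (\<exists>P. \<forall>i<d. \<forall>j<d. \<forall>m<d. \<forall>n<d.
      (\<Sum>k<d. \<Sum>l<d. R i l j k * P k m l n) = kd i n * kd m j)"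

definition hecke_symmetry :: "nat \<Rightarrow> 'k::field \<Rightarrow> (nat \<Rightarrow> nat \<Rightarrow> nat \<Rightarrow> nat \<Rightarrow> 'k) \<Rightarrow> bool" where
  "hecke_symmetry d q R \<longleftrightarrow> invertible_R d R \<and> yang_baxter d R \<and> hecke_quadratic d q R \<and> closed_R d R"

definition admissible_q :: "'k::field \<Rightarrow> bool" where
  "admissible_q q \<longleftrightarrow> q \<noteq> 0 \<and> (\<forall>n::nat. n > 0 \<longrightarrow> q ^ n = 1 \<longrightarrow> q = 1)"

datatype gen = Z nat nat | T nat nat  \<comment> \<open>Z i j = z^i_j, T i j = t^i_j\<close>

fun gen_ok :: "nat \<Rightarrow> gen \<Rightarrow> bool" where
  "gen_ok d (Z i j) \<longleftrightarrow> i < d \<and> j < d"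
| "gen_ok d (T i j) \<longleftrightarrow> i < d \<and> j < d"

definition word_ok :: "nat \<Rightarrow> gen list \<Rightarrow> bool" where
  "word_ok d w \<longleftrightarrow> (\<forall>g\<in>set w. gen_ok d g)"

text \<open>Elements of the free algebra: finitely supported coefficient functions on words
  in the generators with indices below d.\<close>
definition FA :: "nat \<Rightarrow> (gen list \<Rightarrow> 'k::field) set" where
  "FA d = {f. finite {w. f w \<noteq> 0} \<and> (\<forall>w. f w \<noteq> 0 \<longrightarrow> word_ok d w)}"

definition mono :: "gen list \<Rightarrow> gen list \<Rightarrow> 'k::field" where
  "mono u = (\<lambda>w. if w = u then 1 else 0)"

definition fmul :: "(gen list \<Rightarrow> 'k::field) \<Rightarrow> (gen list \<Rightarrow> 'k) \<Rightarrow> gen list \<Rightarrow> 'k" where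
  "fmul f g = (\<lambda>w. \<Sum>n\<in>{0..length w}. f (take n w) * g (drop n w))"

definition relRTT :: "nat \<Rightarrow> (nat \<Rightarrow> nat \<Rightarrow> nat \<Rightarrow> nat \<Rightarrow> 'k::field) \<Rightarrow> nat \<Rightarrow> nat \<Rightarrow> nat \<Rightarrow> nat \<Rightarrow> gen list \<Rightarrow> 'k" where
  "relRTT d R k l i j = (\<lambda>w.
     (\<Sum>m<d. \<Sum>n<d. R m n i j * (if w = [Z k m, Z l n] then 1 else 0))
   - (\<Sum>p<d. \<Sum>s<d. R k l p s * (if w = [Z p i, Z s j] then 1 else 0)))"

definition relTZ :: "nat \<Rightarrow> nat \<Rightarrow> nat \<Rightarrow> gen list \<Rightarrow> 'k::field" where
  "relTZ d i k = (\<lambda>w. (\<Sum>j<d. if w = [T i j, Z j k] then 1 else 0) - (if w = [] then kd i k else 0))"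

definition relZT :: "nat \<Rightarrow> nat \<Rightarrow> nat \<Rightarrow> gen list \<Rightarrow> 'k::field" where
  "relZT d i k = (\<lambda>w. (\<Sum>j<d. if w = [Z i j, T j k] then 1 else 0) - (if w = [] then kd i k else 0))"

text \<open>The two-sided ideal generated by the relations; H_R is FA d modulo this ideal.\<close>
inductive_set relIdeal :: "nat \<Rightarrow> (nat \<Rightarrow> nat \<Rightarrow> nat \<Rightarrow> nat \<Rightarrow> 'k::field) \<Rightarrow> (gen list \<Rightarrow> 'k) set"
  for d R where
  zero: "(\<lambda>_. 0) \<in> relIdeal d R"
| rRTT: "\<lbrakk>k < d; l < d; i < d; j < d\<rbrakk> \<Longrightarrow> relRTT d R k l i j \<in> relIdeal d R"
| rTZ: "\<lbrakk>i < d; k < d\<rbrakk> \<Longrightarrow> relTZ d i k \<in> relIdeal d R"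
| rZT: "\<lbrakk>i < d; k < d\<rbrakk> \<Longrightarrow> relZT d i k \<in> relIdeal d R"
| add: "\<lbrakk>f \<in> relIdeal d R; g \<in> relIdeal d R\<rbrakk> \<Longrightarrow> (\<lambda>w. f w + g w) \<in> relIdeal d R"
| smult: "f \<in> relIdeal d R \<Longrightarrow> (\<lambda>w. c * f w) \<in> relIdeal d R"
| mult: "\<lbrakk>f \<in> relIdeal d R; word_ok d u; word_ok d v\<rbrakk>
          \<Longrightarrow> fmul (fmul (mono u) f) (mono v) \<in> relIdeal d R"

text \<open>Delta(z^j_i) = sum_k z^j_k (x) z^k_i,  Delta(t^j_i) = sum_k t^k_i (x) t^j_k.\<close>
fun cop_left :: "gen \<Rightarrow> nat \<Rightarrow> gen" where
  "cop_left (Z j i) k = Z j k"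
| "cop_left (T j i) k = T k i"

fun cop_right :: "gen \<Rightarrow> nat \<Rightarrow> gen" where
  "cop_right (Z j i) k = Z k i"
| "cop_right (T j i) k = T j k"

definition idx_lists :: "nat \<Rightarrow> nat \<Rightarrow> nat list set" where
  "idx_lists d n = {ks. length ks = n \<and> set ks \<subseteq> {..<d}}"

text \<open>Delta(w) for a word w = g_1...g_n is sum over ks of
  (cop_left g_1 k_1 ... cop_left g_n k_n) (x) (cop_right g_1 k_1 ... cop_right g_n k_n).\<close>
definition wleft :: "gen list \<Rightarrow> nat list \<Rightarrow> gen list" where
  "wleft w ks = map (\<lambda>(g,k). cop_left g k) (zip w ks)"

definition wright :: "gen list \<Rightarrow> nat list \<Rightarrow> gen list" where
  "wright w ks = map (\<lambda>(g,k). cop_right g k) (zip w ks)"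

text \<open>A linear functional on the free algebra, determined by its values phi on words.\<close>
definition lin_ext :: "(gen list \<Rightarrow> 'k::field) \<Rightarrow> (gen list \<Rightarrow> 'k) \<Rightarrow> 'k" where
  "lin_ext phi f = (\<Sum>w\<in>{w. f w \<noteq> 0}. f w * phi w)"

text \<open>(id (x) phi)(Delta f) as an element of the free algebra\<close>
definition id_tensor_Delta :: "nat \<Rightarrow> (gen list \<Rightarrow> 'k::field) \<Rightarrow> (gen list \<Rightarrow> 'k) \<Rightarrow> gen list \<Rightarrow> 'k" where
  "id_tensor_Delta d phi f = (\<lambda>u. \<Sum>w\<in>{w. f w \<noteq> 0}. f w *
      (\<Sum>ks\<in>idx_lists d (length w). if wleft w ks = u then phi (wright w ks) else 0))"

text \<open>A linear functional on H_R: a linear functional on the free algebra vanishing on the ideal.\<close>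
definition functional_on_HR :: "nat \<Rightarrow> (nat \<Rightarrow> nat \<Rightarrow> nat \<Rightarrow> nat \<Rightarrow> 'k::field) \<Rightarrow> (gen list \<Rightarrow> 'k) \<Rightarrow> bool" where
  "functional_on_HR d R phi \<longleftrightarrow> (\<forall>f\<in>relIdeal d R. lin_ext phi f = 0)"

text \<open>Left integral: int(x) 1 = sum x_(1) int(x_(2)) in H_R for all x,
  i.e. the difference of representatives lies in the ideal.\<close>
definition left_integral :: "nat \<Rightarrow> (nat \<Rightarrow> nat \<Rightarrow> nat \<Rightarrow> nat \<Rightarrow> 'k::field) \<Rightarrow> (gen list \<Rightarrow> 'k) \<Rightarrow> bool" where
  "left_integral d R phi \<longleftrightarrow> functional_on_HR d R phi \<and>
     (\<forall>f\<in>FA d. (\<lambda>u. (if u = [] then lin_ext phi f else 0) - id_tensor_Delta d phi f u) \<in> relIdeal d R)"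

fun gdeg :: "gen \<Rightarrow> int" where
  "gdeg (Z _ _) = 1"
| "gdeg (T _ _) = -1"

definition wdeg :: "gen list \<Rightarrow> int" where
  "wdeg w = sum_list (map gdeg w)"

definition homogeneous_of_degree :: "int \<Rightarrow> (gen list \<Rightarrow> 'k::zero) \<Rightarrow> bool" where
  "homogeneous_of_degree n f \<longleftrightarrow> (\<forall>w. f w \<noteq> 0 \<longrightarrow> wdeg w = n)"

end

theory Submission
  imports Defs
begin

lemma L1: "fmul (mono u) f w = (if take (length u) w = u then f (drop (length u) w) else (0::'k::field))"
proof -
  have e: "\<And>n. n \<in> {0..length w} \<Longrightarrow> (if take n w = u then 1 else 0) * f (drop n w)
      = (if n = length u then (if take (length u) w = u then f (drop (length u) w) else 0) else (0::'k))"
    by auto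
  have "fmul (mono u) f w = (\<Sum>n\<in>{0..length w}. (if n = length u then (if take (length u) w = u then f (drop (length u) w) else 0) else (0::'k)))"
    unfolding fmul_def mono_def using e by (intro sum.cong) auto
  also have "\<dots> = (if take (length u) w = u then f (drop (length u) w) else 0)"
    by (auto simp: sum.delta' dest: sym[of _ "take _ _"] intro: ccontr)
  finally show ?thesis .
qed

lemma L2: "fmul g (mono v) w = (if length v \<le> length w \<and> drop (length w - length v) w = v then g (take (length w - length v) w) else (0::'k::field))"
proof -
  have e: "\<And>n. n \<in> {0..length w} \<Longrightarrow> g (take n w) * (if drop n w = v then 1 else 0)
      = (if n = length w - length v then (if length v \<le> length w \<and> drop (length w - length v) w = v then g (take (length w - length v) w) else 0) else (0::'k))"
    by auto
  have "fmul g (mono v) w = (\<Sum>n\<in>{0..length w}. (if n = length w - length v then (if length v \<le> length w \<and> drop (length w - length v) w = v then g (take (length w - length v) w) else 0) else (0::'k)))"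
    unfolding fmul_def mono_def using e by (intro sum.cong) auto
  also have "\<dots> = (if length v \<le> length w \<and> drop (length w - length v) w = v then g (take (length w - length v) w) else 0)"
    by (simp add: sum.delta')
  finally show ?thesis .
qed


lemma wdeg_append[simp]: "wdeg (a @ b) = wdeg a + wdeg b"
  by (simp add: wdeg_def)

lemma wdeg_Nil[simp]: "wdeg [] = 0" by (simp add: wdeg_def)

lemma gdeg_cop_left[simp]: "gdeg (cop_left g k) = gdeg g"
  by (cases g) auto

lemma wdeg_wleft: "length ks = length w \<Longrightarrow> wdeg (wleft w ks) = wdeg w"
proof (induction w arbitrary: ks)
  case Nil then show ?case by (simp add: wleft_def)
next
  case (Cons g w)
  then obtain k ks' where "ks = k # ks'" "length ks' = length w" by (cases ks) auto
  with Cons.IH[of ks'] show ?case by (simp add: wleft_def wdeg_def)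
qed

definition proj :: "int \<Rightarrow> (gen list \<Rightarrow> 'k::field) \<Rightarrow> gen list \<Rightarrow> 'k" where
  "proj m g = (\<lambda>w. if wdeg w = m then g w else 0)"

lemma proj_homog:
  assumes "\<And>w. wdeg w \<noteq> k \<Longrightarrow> g w = 0" and "g \<in> relIdeal d R"
  shows "proj m g \<in> relIdeal d R"
proof (cases "m = k")
  case True
  then have "proj m g = g" using assms(1) by (auto simp: proj_def fun_eq_iff)
  then show ?thesis using assms(2) by simp
next
  case False
  then have "proj m g = (\<lambda>_. 0)" using assms(1) by (auto simp: proj_def fun_eq_iff)
  then show ?thesis by (simp add: relIdeal.zero)
qed

lemma sandwich_proj:
  "proj m (fmul (fmul (mono u) f) (mono v)) = fmul (fmul (mono u) (proj (m - wdeg u - wdeg v) f)) (mono v)"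
proof (rule ext)
  fix w :: "gen list"
  let ?w' = "take (length w - length v) w"
  show "proj m (fmul (fmul (mono u) f) (mono v)) w = fmul (fmul (mono u) (proj (m - wdeg u - wdeg v) f)) (mono v) w"
  proof (cases "length v \<le> length w \<and> drop (length w - length v) w = v \<and> take (length u) ?w' = u")
    case True
    then have "w = ?w' @ v" by (metis append_take_drop_id)
    moreover have "?w' = u @ drop (length u) ?w'" using True by (metis append_take_drop_id)
    ultimately have "wdeg w = wdeg u + wdeg (drop (length u) ?w') + wdeg v"
      by (metis wdeg_append add.commute add.left_commute)
    then show ?thesis using True by (simp add: L1 L2 proj_def)
  next
    case False
    then show ?thesis by (auto simp add: L1 L2 proj_def)
  qed
qed

lemma ideal_proj: "g \<in> relIdeal d R \<Longrightarrow> proj m g \<in> relIdeal d R"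
proof (induction g arbitrary: m rule: relIdeal.induct)
  case zero
  have "proj m (\<lambda>_. 0) = (\<lambda>_. (0::'a))" by (simp add: proj_def fun_eq_iff)
  then show ?case by (simp add: relIdeal.zero)
next
  case (rRTT k l i j)
  show ?case
  proof (rule proj_homog[where k=2])
    fix w assume a: "wdeg w \<noteq> 2"
    then have "\<And>a b c e. w \<noteq> [Z a b, Z c e]" by (auto simp: wdeg_def)
    then show "relRTT d R k l i j w = 0" by (simp add: relRTT_def)
  qed (use rRTT in \<open>simp add: relIdeal.rRTT\<close>)
next
  case (rTZ i k)
  show ?case
  proof (rule proj_homog[where k=0])
    fix w assume a: "wdeg w \<noteq> 0"
    then have "\<And>a b c e. w \<noteq> [T a b, Z c e]" "w \<noteq> []" by (auto simp: wdeg_def)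
    then show "relTZ d i k w = 0" by (simp add: relTZ_def)
  qed (use rTZ in \<open>simp add: relIdeal.rTZ\<close>)
next
  case (rZT i k)
  show ?case
  proof (rule proj_homog[where k=0])
    fix w assume a: "wdeg w \<noteq> 0"
    then have "\<And>a b c e. w \<noteq> [Z a b, T c e]" "w \<noteq> []" by (auto simp: wdeg_def)
    then show "relZT d i k w = 0" by (simp add: relZT_def)
  qed (use rZT in \<open>simp add: relIdeal.rZT\<close>)
next
  case (add f g)
  have "proj m (\<lambda>w. f w + g w) = (\<lambda>w. proj m f w + proj m g w)" by (simp add: proj_def fun_eq_iff)
  then show ?case using add relIdeal.add by metis
next
  case (smult f c)
  have "proj m (\<lambda>w. c * f w) = (\<lambda>w. c * proj m f w)" by (simp add: proj_def fun_eq_iff)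
  then show ?case using smult relIdeal.smult by metis
next
  case (mult f u v)
  then show ?case by (simp add: sandwich_proj relIdeal.mult)
qed


lemma sandwich_unit: "fmul (fmul (mono a) (mono [])) (mono []) = (mono a :: gen list \<Rightarrow> 'k::field)"
proof (rule ext)
  fix w :: "gen list"
  have "fmul (fmul (mono a) (mono [])) (mono []) w = (if take (length a) w = a \<and> drop (length a) w = [] then 1 else (0::'k))"
    by (simp only: L1 L2) (auto simp add: mono_def)
  also have "\<dots> = mono a w"
    by (auto simp: mono_def)
  finally show "fmul (fmul (mono a) (mono [])) (mono []) w = (mono a w :: 'k)" .
qed

lemma all_in_ideal:
  assumes u: "(mono [] :: gen list \<Rightarrow> 'k::field) \<in> relIdeal d R" and f: "f \<in> FA d"
  shows "f \<in> relIdeal d R"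
proof -
  let ?S = "{w. f w \<noteq> 0}"
  have fin: "finite ?S" and ok: "\<And>w. w \<in> ?S \<Longrightarrow> word_ok d w" using f by (auto simp: FA_def)
  have gen: "\<And>w. word_ok d w \<Longrightarrow> (mono w :: gen list \<Rightarrow> 'k) \<in> relIdeal d R"
  proof -
    fix w assume "word_ok d w"
    moreover have "word_ok d []" by (simp add: word_ok_def)
    ultimately have "fmul (fmul (mono w) (mono [])) (mono []) \<in> relIdeal d R"
      using u relIdeal.mult by blast
    then show "(mono w :: gen list \<Rightarrow> 'k) \<in> relIdeal d R" by (simp add: sandwich_unit)
  qed
  have "\<And>T. finite T \<Longrightarrow> T \<subseteq> ?S \<Longrightarrow> (\<lambda>x. \<Sum>w\<in>T. f w * mono w x) \<in> relIdeal d R"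
  proof -
    fix T :: "gen list set"
    show "finite T \<Longrightarrow> T \<subseteq> ?S \<Longrightarrow> (\<lambda>x. \<Sum>w\<in>T. f w * mono w x) \<in> relIdeal d R"
    proof (induction T rule: finite_induct)
      case empty
      then show ?case by (simp add: relIdeal.zero)
    next
      case (insert a T)
      have "(\<lambda>x. f a * mono a x) \<in> relIdeal d R"
        using gen[of a] ok[of a] insert.prems relIdeal.smult by blast
      moreover have "(\<lambda>x. \<Sum>w\<in>T. f w * mono w x) \<in> relIdeal d R" using insert by simp
      ultimately have "(\<lambda>x. f a * mono a x + (\<Sum>w\<in>T. f w * mono w x)) \<in> relIdeal d R"
        using relIdeal.add by blast
      then show ?case using insert.hyps by simp
    qed
  qed
  from this[OF fin order_refl] have "(\<lambda>x. \<Sum>w\<in>?S. f w * mono w x) \<in> relIdeal d R" .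
  moreover have "(\<lambda>x. \<Sum>w\<in>?S. f w * mono w x) = f"
  proof
    fix x
    have "(\<Sum>w\<in>?S. f w * mono w x) = (\<Sum>w\<in>?S. if x = w then f x else 0)"
      by (rule sum.cong) (auto simp: mono_def)
    also have "\<dots> = f x" using fin by (simp add: sum.delta)
    finally show "(\<Sum>w\<in>?S. f w * mono w x) = f x" .
  qed
  ultimately show ?thesis by simp
qed

theorem lemma4p1:
  fixes d :: nat and q :: "'k::field_char_0"
    and R :: "nat \<Rightarrow> nat \<Rightarrow> nat \<Rightarrow> nat \<Rightarrow> 'k"
    and phi :: "gen list \<Rightarrow> 'k"
    and f :: "gen list \<Rightarrow> 'k" and n :: int
  assumes "admissible_q q"
    and "hecke_symmetry d q R"
    and "left_integral d R phi"
    and "f \<in> FA d"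
    and "homogeneous_of_degree n f"
    and "n \<noteq> 0"
  shows "lin_ext phi f = 0"
proof -
  define c where "c = lin_ext phi f"
  have fHR: "functional_on_HR d R phi" and
    D: "(\<lambda>u. (if u = [] then c else 0) - id_tensor_Delta d phi f u) \<in> relIdeal d R"
    using assms(3,4) unfolding left_integral_def c_def by auto
  have zero: "id_tensor_Delta d phi f u = 0" if "wdeg u = 0" for u
    unfolding id_tensor_Delta_def
  proof (rule sum.neutral, rule ballI)
    fix w assume w: "w \<in> {w. f w \<noteq> 0}"
    then have "wdeg w = n" using assms(5) by (simp add: homogeneous_of_degree_def)
    have "(\<Sum>ks\<in>idx_lists d (length w). if wleft w ks = u then phi (wright w ks) else 0) = 0"
    proof (rule sum.neutral, rule ballI)
      fix ks assume "ks \<in> idx_lists d (length w)"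
      then have "length ks = length w" by (simp add: idx_lists_def)
      then have "wdeg (wleft w ks) = n" using \<open>wdeg w = n\<close> wdeg_wleft by simp
      then have "wleft w ks \<noteq> u" using that assms(6) by auto
      then show "(if wleft w ks = u then phi (wright w ks) else 0) = 0" by simp
    qed
    then show "f w * (\<Sum>ks\<in>idx_lists d (length w). if wleft w ks = u then phi (wright w ks) else 0) = 0"
      by simp
  qed
  have "proj 0 (\<lambda>u. (if u = [] then c else 0) - id_tensor_Delta d phi f u) = (\<lambda>u. if u = [] then c else 0)"
    by (auto simp: proj_def fun_eq_iff zero)
  with ideal_proj[OF D, of 0] have C: "(\<lambda>u. if u = [] then c else 0) \<in> relIdeal d R" by simp
  show ?thesis
  proof (cases "c = 0")
    case True then show ?thesis by (simp add: c_def)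
  next
    case False
    from relIdeal.smult[OF C, of "inverse c"]
    have "(\<lambda>w. inverse c * (if w = [] then c else 0)) \<in> relIdeal d R" .
    moreover have "(\<lambda>w. inverse c * (if w = [] then c else 0)) = mono []"
      using False by (auto simp: mono_def fun_eq_iff)
    ultimately have "(mono [] :: gen list \<Rightarrow> 'k) \<in> relIdeal d R" by simp
    from all_in_ideal[OF this assms(4)] fHR show ?thesis by (simp add: functional_on_HR_def)
  qed
qed

end
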